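(* Let $n=m\delta$ with integers $m,\delta\ge 1$, let $V=\mathbb{F}_2^n=V_1\times\cdots\times V_\delta$ with each brick $V_j\cong\mathbb{F}_2^m$, where $V_j$ consists of the coordinates $(j-1)m,\dots,jm-1$. Let $\gamma\in\mathrm{Sym}(V)$ be a parallel S-Box, i.e. $(x_1,\dots,x_\delta)\gamma=(x_1\gamma_1,\dots,x_\delta\gamma_\delta)$ for $x_j\in V_j$, where each $\gamma_j\in\mathrm{Sym}(V_j)$ and $0\gamma_j\neq 0$. Let $\lambda\in\mathrm{Sym}(V)$ be an invertible linear map (mixing layer) which is non-type-preserving. For $k\in V$ let $\sigma_k:v\mapsto v\boxplus k$ be the translation by $k$ modulo $2^n$, and let $\Gamma_\infty=\langle \gamma\lambda\sigma_k : k\in V\rangle\le\mathrm{Sym}(V)$ be the group generated by the round functions $\varepsilon_k=\gamma\lambda\sigma_k$. Then $\Gamma_\infty$ is primitive on $V$.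
   Context: A vector $a=(a_0,\dots,a_{n-1})\in V$ is identified with the integer $\sum_i a_i2^i$, and $\boxplus$ is addition of these integers modulo $2^n$. Maps act on the right and are composed left to right. Type of a subset: for $D\subseteq V$, its type is the sequence of $\delta$ symbols whose $j$-th entry is "white" if the projection of $D$ onto $V_j$ has size $1$, "ruled" if that projection has size $t$ with $1<t<2^m$, and "black" if the projection is all of $V_j$. Non-type-preserving: an invertible linear map $\lambda$ of $V$ is called non-type-preserving if for every subset $D\subseteq V$ whose type is of the form (first $a$ entries white, then $b$ entries ruled, then $c$ entries black) with integers $a,c\ge 0$, $b\in\{0,1\}$, $a+b+c=\delta$, and not all-white and not all-black, the type of $D\lambda=\{v\lambda:v\in D\}$ differs from the type of $D$. A group $G\le\mathrm{Sym}(V)$ is primitive if it is transitive and preserves no partition of $V$ other than $\{V\}$ and the partition into singletons. *)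

theory Defs
  imports "HOL-Algebra.Bij" "HOL-Algebra.Generated_Groups"
begin

text \<open>Vectors of V = F_2^n are identified with the naturals 0 ..< 2^n,
  coordinate i being bit i.  Brick j (0-based, j < delta) consists of the
  coordinates j*m ..< (j+1)*m.\<close>

definition vspace :: "nat \<Rightarrow> nat set" where
  "vspace n = {..<2^n}"

definition brick_proj :: "nat \<Rightarrow> nat \<Rightarrow> nat \<Rightarrow> nat" where
  "brick_proj m j v = (v div 2^(j*m)) mod 2^m"

definition transl :: "nat \<Rightarrow> nat \<Rightarrow> nat \<Rightarrow> nat" where
  "transl n k v = (v + k) mod 2^n"

text \<open>F_2-linear map of V (additivity w.r.t. xor; over F_2 this is linearity).\<close>
definition f2_linear :: "nat \<Rightarrow> (nat \<Rightarrow> nat) \<Rightarrow> bool" where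
  "f2_linear n f \<longleftrightarrow> (\<forall>x\<in>vspace n. f x \<in> vspace n) \<and>
     (\<forall>x\<in>vspace n. \<forall>y\<in>vspace n. f (xor x y) = xor (f x) (f y))"

definition parallel_sbox :: "nat \<Rightarrow> nat \<Rightarrow> (nat \<Rightarrow> nat \<Rightarrow> nat) \<Rightarrow> (nat \<Rightarrow> nat) \<Rightarrow> bool" where
  "parallel_sbox m \<delta> gs g \<longleftrightarrow>
     (\<forall>j<\<delta>. bij_betw (gs j) {..<2^m} {..<2^m} \<and> gs j 0 \<noteq> 0) \<and>
     (\<forall>v\<in>vspace (m*\<delta>). g v = (\<Sum>j<\<delta>. gs j (brick_proj m j v) * 2^(j*m)))"

datatype symb = White | Ruled | Black

definition brick_symb :: "nat \<Rightarrow> nat set \<Rightarrow> nat \<Rightarrow> symb" where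
  "brick_symb m D j =
     (let t = card (brick_proj m j ` D) in
      if t = 1 then White else if t = 2^m then Black else Ruled)"

definition set_type :: "nat \<Rightarrow> nat \<Rightarrow> nat set \<Rightarrow> symb list" where
  "set_type m \<delta> D = map (brick_symb m D) [0..<\<delta>]"

definition non_type_preserving :: "nat \<Rightarrow> nat \<Rightarrow> (nat \<Rightarrow> nat) \<Rightarrow> bool" where
  "non_type_preserving m \<delta> f \<longleftrightarrow>
     (\<forall>D a b c. D \<subseteq> vspace (m*\<delta>) \<and> D \<noteq> {} \<and> b \<le> 1 \<and> a + b + c = \<delta> \<and>
        set_type m \<delta> D = replicate a White @ replicate b Ruled @ replicate c Black \<and>
        a \<noteq> \<delta> \<and> c \<noteq> \<delta>
        \<longrightarrow> set_type m \<delta> (f ` D) \<noteq> set_type m \<delta> D)"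

definition is_partition :: "'a set \<Rightarrow> 'a set set \<Rightarrow> bool" where
  "is_partition S P \<longleftrightarrow> (\<forall>B\<in>P. B \<noteq> {}) \<and> \<Union>P = S \<and>
     (\<forall>B\<in>P. \<forall>C\<in>P. B \<noteq> C \<longrightarrow> B \<inter> C = {})"

definition primitive_on :: "('a \<Rightarrow> 'a) set \<Rightarrow> 'a set \<Rightarrow> bool" where
  "primitive_on G S \<longleftrightarrow>
     (\<forall>x\<in>S. \<forall>y\<in>S. \<exists>g\<in>G. g x = y) \<and>
     (\<forall>P. is_partition S P \<and> (\<forall>g\<in>G. \<forall>B\<in>P. g ` B \<in> P)
        \<longrightarrow> P = {S} \<or> P = (\<lambda>x. {x}) ` S)"

text \<open>Round function epsilon_k = gamma lambda sigma_k (maps act on the right,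
  so gamma is applied first), as an element of Sym(V).\<close>
definition round_fun :: "nat \<Rightarrow> (nat \<Rightarrow> nat) \<Rightarrow> (nat \<Rightarrow> nat) \<Rightarrow> nat \<Rightarrow> nat \<Rightarrow> nat" where
  "round_fun n g l k = (\<lambda>v\<in>vspace n. transl n k (l (g v)))"

end

theory Submission
  imports Defs "HOL-Computational_Algebra.Primes"
begin


lemma bp_alt: "brick_proj m j x = (x mod 2^((Suc j)*m)) div 2^(j*m)"
proof -
  have "x mod (2^(j*m) * 2^m) = 2^(j*m) * (x div 2^(j*m) mod 2^m) + x mod 2^(j*m)"
    by (rule mod_mult2_eq)
  moreover have "(2::nat)^(j*m) * 2^m = 2^((Suc j)*m)" by (simp add: power_add[symmetric] algebra_simps)
  ultimately show ?thesis unfolding brick_proj_def by simp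
qed

lemma bp_lt: "brick_proj m j x < 2^m" unfolding brick_proj_def by simp

lemma bp_mod: assumes "j < d" shows "brick_proj m j (x mod 2^(d*m)) = brick_proj m j x"
proof -
  have "(2::nat)^(Suc j * m) dvd 2^(d*m)" using assms mult_le_mono1[of "Suc j" d m] by (intro le_imp_power_dvd) simp
  then show ?thesis unfolding bp_alt by (simp add: mod_mod_cancel)
qed

lemma digits_sum:
  fixes d :: "nat \<Rightarrow> nat"
  assumes "\<forall>i<k. d i < 2^m"
  shows "(\<Sum>i<k. d i * 2^(i*m)) < 2^(k*m) \<and> (\<forall>j<k. brick_proj m j (\<Sum>i<k. d i * 2^(i*m)) = d j)"
  using assms
proof (induction k)
  case 0 then show ?case by simp
next
  case (Suc k)
  let ?s = "\<Sum>i<k. d i * 2^(i*m)"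
  have IH: "?s < 2^(k*m)" "\<forall>j<k. brick_proj m j ?s = d j" using Suc by auto
  have dk: "d k < 2^m" using Suc.prems by auto
  have sum: "(\<Sum>i<Suc k. d i * 2^(i*m)) = ?s + d k * 2^(k*m)" by simp
  have "?s + d k * 2^(k*m) < 2^(k*m) + d k * 2^(k*m)" using IH by simp
  also have "\<dots> = (d k + 1) * 2^(k*m)" by simp
  also have "\<dots> \<le> 2^m * 2^(k*m)" using dk by (intro mult_right_mono) auto
  also have "\<dots> = 2^(Suc k * m)" by (simp add: power_add[symmetric] algebra_simps)
  finally have lt: "?s + d k * 2^(k*m) < 2^(Suc k * m)" .
  have "\<forall>j<Suc k. brick_proj m j (?s + d k * 2^(k*m)) = d j"
  proof (intro allI impI)
    fix j assume j: "j < Suc k"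
    show "brick_proj m j (?s + d k * 2^(k*m)) = d j"
    proof (cases "j < k")
      case True
      have "(?s + d k * 2^(k*m)) mod 2^(k*m) = ?s" using IH by simp
      then have "brick_proj m j (?s + d k * 2^(k*m)) = brick_proj m j ?s"
        using bp_mod[OF True, of m "?s + d k * 2^(k*m)"] by simp
      then show ?thesis using IH True by simp
    next
      case False
      then have jk: "j = k" using j by simp
      have "(?s + d k * 2^(k*m)) div 2^(k*m) = d k" using IH by simp
      then show ?thesis unfolding brick_proj_def jk using dk by simp
    qed
  qed
  then show ?case using sum lt by simp
qed

lemma digits_decomp:
  assumes "v < 2^(k*m)"
  shows "v = (\<Sum>j<k. brick_proj m j v * 2^(j*m))"
  using assms
proof (induction k arbitrary: v)
  case 0 then show ?case by simp
next
  case (Suc k)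
  have "v mod 2^(k*m) < 2^(k*m)" by simp
  from Suc.IH[OF this] have A: "v mod 2^(k*m) = (\<Sum>j<k. brick_proj m j v * 2^(j*m))"
    using bp_mod[of _ k m v] by simp
  have "v div 2^(k*m) < 2^m" using Suc.prems
    by (simp add: less_mult_imp_div_less power_add mult.commute)
  then have B: "brick_proj m k v = v div 2^(k*m)" unfolding brick_proj_def by simp
  have "v = v mod 2^(k*m) + (v div 2^(k*m)) * 2^(k*m)" by (metis add.commute div_mult_mod_eq)
  then show ?case using A B by simp
qed




definition cset :: "nat \<Rightarrow> nat \<Rightarrow> nat \<Rightarrow> nat set" where
  "cset n i c = {z. z < 2^n \<and> z mod 2^i = c mod 2^i}"

lemma divmod_pow: "(x div 2^p) mod 2^q = (x mod 2^(p+q)) div (2::nat)^p"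
proof -
  have "x mod (2^p * 2^q) = 2^p * (x div 2^p mod 2^q) + x mod 2^p"
    by (rule mod_mult2_eq)
  then show ?thesis by (simp add: power_add)
qed

lemma bp_mod2: assumes "Suc j * m \<le> e" shows "brick_proj m j (x mod 2^e) = brick_proj m j x"
proof -
  have "(2::nat)^(Suc j * m) dvd 2^e" using assms by (intro le_imp_power_dvd)
  then show ?thesis unfolding bp_alt by (simp add: mod_mod_cancel)
qed

lemma cset_white:
  assumes "Suc j * m \<le> i" "i \<le> n"
  shows "brick_symb m (cset n i c) j = White"
proof -
  let ?a = "c mod 2^i"
  have "?a < 2^i" by simp
  also have "(2::nat)^i \<le> 2^n" using assms by simp
  finally have ain: "?a \<in> cset n i c" unfolding cset_def by simp
  have "brick_proj m j z = brick_proj m j ?a" if "z \<in> cset n i c" for z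
    using that bp_mod2[OF assms(1), of z] bp_mod2[OF assms(1), of c] unfolding cset_def by simp
  then have "brick_proj m j ` cset n i c = {brick_proj m j ?a}" using ain by blast
  then show ?thesis unfolding brick_symb_def by simp
qed

lemma cset_black:
  assumes "i \<le> j * m" "j < \<delta>" "n = m * \<delta>" "m \<ge> 1"
  shows "brick_symb m (cset n i c) j = Black"
proof -
  let ?a = "c mod 2^i"
  have "(2::nat)^i \<le> 2^(j*m)" using assms by simp
  moreover have "?a < 2^i" by simp
  ultimately have alt: "?a < 2^(j*m)" by linarith
  have dv: "(2::nat)^i dvd 2^(j*m)" using assms by (intro le_imp_power_dvd)
  have "t \<in> brick_proj m j ` cset n i c" if t: "t < 2^m" for t
  proof -
    let ?z = "?a + t * 2^(j*m)"
    have "?z < 2^(j*m) + t*2^(j*m)" using alt by simp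
    also have "\<dots> = (t+1) * 2^(j*m)" by simp
    also have "\<dots> \<le> 2^m * 2^(j*m)" using t by (intro mult_right_mono) auto
    also have "\<dots> = 2^(Suc j * m)" by (simp add: power_add[symmetric] algebra_simps)
    also have "\<dots> \<le> 2^n" using assms mult_le_mono1[of "Suc j" \<delta> m] by (simp add: mult.commute)
    finally have zl: "?z < 2^n" .
    have "?z mod 2^i = ?a mod 2^i" using dv by (metis dvd_mult mod_mult_self2 mult.commute dvd_def)
    then have "?z \<in> cset n i c" using zl unfolding cset_def by simp
    moreover have "brick_proj m j ?z = t" unfolding brick_proj_def using alt t by simp
    ultimately show ?thesis by force
  qed
  then have "brick_proj m j ` cset n i c = {..<2^m}" using bp_lt by auto
  moreover have "(2::nat)^m \<noteq> 1" using assms by simp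
  ultimately show ?thesis unfolding brick_symb_def by simp
qed

lemma cset_ruled:
  assumes "j = i div m" "i mod m \<noteq> 0" "i < n" "n = m * \<delta>" "m \<ge> 1"
  shows "brick_symb m (cset n i c) j = Ruled"
proof -
  let ?a = "c mod 2^i" and ?r = "i mod m"
  have i: "i = j*m + ?r" using assms by simp
  have rm: "?r < m" using assms by simp
  have alt: "?a < 2^i" by simp
  have ri0: "(2::nat)^i = 2^?r * 2^(j*m)" by (subst i) (simp add: power_add mult.commute)
  have ai: "?a div 2^(j*m) < 2^?r"
    using alt unfolding ri0 by (rule less_mult_imp_div_less)
  define e where "e = ?a div 2^(j*m)"
  have key: "brick_proj m j z mod 2^?r = e" if "z \<in> cset n i c" for z
  proof -
    have "brick_proj m j z mod 2^?r = (z div 2^(j*m)) mod 2^?r"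
      unfolding brick_proj_def using rm by (simp add: mod_mod_cancel le_imp_power_dvd)
    also have "\<dots> = (z mod 2^i) div 2^(j*m)" using i divmod_pow by simp
    also have "\<dots> = e" using that unfolding cset_def e_def by simp
    finally show ?thesis .
  qed
  have sub: "brick_proj m j ` cset n i c \<subseteq> {..<2^m}" using bp_lt by auto
  have notall: "(e+1) mod 2^?r \<notin> brick_proj m j ` cset n i c"
  proof
    assume "(e+1) mod 2^?r \<in> brick_proj m j ` cset n i c"
    then obtain z where "z \<in> cset n i c" "(e+1) mod 2^?r = brick_proj m j z" by auto
    then have "(e+1) mod 2^?r mod 2^?r = e" using key by metis
    moreover have "e < 2^?r" using ai e_def by simp
    moreover have "(2::nat)^?r \<ge> 2" using assms by (simp add: self_le_power)
    ultimately show False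
    proof (cases "e + 1 < 2^?r")
      case True
      then show False using \<open>(e+1) mod 2^?r mod 2^?r = e\<close> by simp
    next
      case False
      then have "e + 1 = 2^?r" using \<open>e < 2^?r\<close> by simp
      then show False using \<open>(e+1) mod 2^?r mod 2^?r = e\<close> \<open>2^?r \<ge> 2\<close> by simp
    qed
  qed
  have rmp: "(2::nat)^?r \<le> 2^m" using rm by (intro power_increasing) auto
  have "(e+1) mod 2^?r < 2^?r" by simp
  then have "(e+1) mod 2^?r < 2^m" using rmp by linarith
  then have nb: "card (brick_proj m j ` cset n i c) \<noteq> 2^m"
    using sub notall by (metis card_lessThan card_subset_eq finite_lessThan lessThan_iff)
  have "?a \<in> cset n i c"
  proof -
    have "(2::nat)^i \<le> 2^n" using assms by simp
    then have "?a < 2^n" using alt by linarith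
    then show ?thesis unfolding cset_def by simp
  qed
  moreover have "?a + 2^i \<in> cset n i c"
  proof -
    have "?a + 2^i < 2^i + 2^i" using alt by simp
    also have "\<dots> = 2^(Suc i)" by simp
    also have "\<dots> \<le> 2^n" using assms by (intro power_increasing) auto
    finally show ?thesis unfolding cset_def by simp
  qed
  moreover have "brick_proj m j ?a \<noteq> brick_proj m j (?a + 2^i)"
  proof -
    have ri: "(2::nat)^i = 2^?r * 2^(j*m)" by (rule ri0)
    have "(?a + 2^i) div 2^(j*m) = e + 2^?r" unfolding e_def ri by simp
    moreover have "e + 2^?r < 2^m"
    proof -
      have "e + 2^?r < 2^?r + 2^?r" using ai e_def by simp
      also have "\<dots> = 2^(Suc ?r)" by simp
      also have "\<dots> \<le> 2^m" using rm by (intro power_increasing) auto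
      finally show ?thesis .
    qed
    ultimately have "brick_proj m j (?a + 2^i) = e + 2^?r" unfolding brick_proj_def by simp
    moreover have "brick_proj m j ?a = e"
    proof -
      have "e < 2^m" using ai e_def rmp by linarith
      then show ?thesis unfolding brick_proj_def e_def by simp
    qed
    ultimately show ?thesis by simp
  qed
  ultimately have "card (brick_proj m j ` cset n i c) \<noteq> 1"
    by (metis (no_types, lifting) card_1_singletonE image_eqI singletonD)
  then show ?thesis using nb unfolding brick_symb_def by simp
qed




lemma neg_mod_lemma:
  fixes N h :: nat
  assumes "h < N"
  shows "((N - 1) * h) mod N = (N - h) mod N"
proof (cases "h = 0")
  case True then show ?thesis by simp
next
  case False
  let ?x = "((N - 1) * h) mod N"
  have N0: "N > 0" using assms by simp
  have "(N - 1) * h + h = N * h" using N0 by (simp add: algebra_simps)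
  then have "(?x + h) mod N = 0" by (metis mod_add_left_eq mod_mult_self1_is_0)
  then obtain q where q: "?x + h = N * q" by blast
  have "?x < N" using N0 by simp
  then have "?x + h < 2 * N" using assms by linarith
  moreover have "?x + h > 0" using False by simp
  moreover have "?x + h > 0" using False by simp
  ultimately have "N * q < N * 2" using q by simp
  then have "q < 2" using N0 by simp
  have q0: "q \<noteq> 0" using q \<open>?x + h > 0\<close> by (cases q) auto
  have "q = 1" using q0 \<open>q < 2\<close> by simp
  then have "?x = N - h" using q by simp
  then show ?thesis using False assms by simp
qed

lemma blocks_transl:
  assumes S: "S = {..<(2::nat)^n}" and P: "is_partition S P"
   and inv: "\<forall>k<2^n. \<forall>B\<in>P. (\<lambda>x. (x+k) mod 2^n) ` B \<in> P"
  shows "P = {S} \<or> P = (\<lambda>x. {x}) ` S \<or> (\<exists>i. 0<i \<and> i<n \<and> cset n i 0 \<in> P \<and> (\<forall>B\<in>P. \<exists>c. B = cset n i c))"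
proof -
  define N where "N = (2::nat)^n"
  have N0: "N > 0" unfolding N_def by simp
  have blk_eq: "B = C" if "B \<in> P" "C \<in> P" "x \<in> B" "x \<in> C" for B C x
    using P that unfolding is_partition_def by blast
  have blk_sub: "B \<subseteq> S" if "B \<in> P" for B using P that unfolding is_partition_def by blast
  have blk_ne: "B \<noteq> {}" if "B \<in> P" for B using P that unfolding is_partition_def by blast
  have ex_blk: "\<exists>B\<in>P. x \<in> B" if "x \<in> S" for x using P that unfolding is_partition_def by blast
  obtain B0 where B0: "B0 \<in> P" "0 \<in> B0" using ex_blk[of 0] S by auto
  have B0S: "B0 \<subseteq> {..<N}" using blk_sub[OF B0(1)] S N_def by simp
  define t where "t k x = (x + k) mod N" for k x
  have Bx: "t x ` B0 \<in> P" "x \<in> t x ` B0" if "x < N" for x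
  proof -
    show "t x ` B0 \<in> P" using inv that B0 unfolding t_def N_def by blast
    have "t x 0 = x" unfolding t_def using that by simp
    then show "x \<in> t x ` B0" using B0 by force
  qed
  have blkx: "B = t x ` B0" if "B \<in> P" "x \<in> B" for B x
  proof -
    have "x < N" using that blk_sub S N_def by auto
    then show ?thesis using blk_eq[OF that(1) Bx(1) that(2) Bx(2)] by simp
  qed
  have clos: "(y + h) mod N \<in> B0" if "h \<in> B0" "y \<in> B0" for h y
  proof -
    have hN: "h < N" using that B0S by auto
    have "h \<in> t h ` B0" using Bx(2)[OF hN] .
    then have "t h ` B0 = B0" using blk_eq[OF Bx(1)[OF hN] B0(1) _ that(1)] by simp
    then show ?thesis using that(2) unfolding t_def by blast
  qed
  have mult: "(k * h) mod N \<in> B0" if "h \<in> B0" for k h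
  proof (induction k)
    case 0 then show ?case using B0 by simp
  next
    case (Suc k)
    have "((k*h) mod N + h) mod N \<in> B0" using clos[OF that Suc.IH] .
    moreover have "((k*h) mod N + h) mod N = (k*h + h) mod N"
      by (rule mod_add_left_eq)
    moreover have "k*h + h = Suc k * h" by simp
    ultimately show ?case by simp
  qed
  have neg: "(N - h) mod N \<in> B0" if "h \<in> B0" for h
    using mult[OF that, of "N - 1"] neg_mod_lemma[of h N] that B0S by auto
  show ?thesis
  proof (cases "B0 = {0}")
    case True
    have "P = (\<lambda>x. {x}) ` S"
    proof
      show "P \<subseteq> (\<lambda>x. {x}) ` S"
      proof
        fix B assume B: "B \<in> P"
        then obtain x where x: "x \<in> B" using blk_ne by blast
        have "x < N" using x B blk_sub S N_def by auto
        then have "B = {x}" using blkx[OF B x] True unfolding t_def by simp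
        then show "B \<in> (\<lambda>x. {x}) ` S" using x B blk_sub by auto
      qed
    next
      show "(\<lambda>x. {x}) ` S \<subseteq> P"
      proof
        fix B assume "B \<in> (\<lambda>x. {x}) ` S"
        then obtain x where x: "x \<in> S" "B = {x}" by auto
        then have xN: "x < N" using S N_def by simp
        then have "t x ` B0 = {x}" using True unfolding t_def by simp
        then show "B \<in> P" using Bx(1)[OF xN] x by simp
      qed
    qed
    then show ?thesis by simp
  next
    case B0ne: False
    show ?thesis
    proof (cases "B0 = S")
      case True
      have "P = {S}"
      proof
        show "P \<subseteq> {S}"
        proof
          fix B assume B: "B \<in> P"
          then obtain x where x: "x \<in> B" using blk_ne by blast
          then have "x \<in> B0" using B blk_sub True by auto
          then show "B \<in> {S}" using blk_eq[OF B B0(1) x] True by simp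
        qed
        show "{S} \<subseteq> P" using True B0 by simp
      qed
      then show ?thesis by simp
    next
      case B0nS: False
      define d where "d = Min (B0 - {0})"
      have fin: "finite (B0 - {0})" using B0S finite_subset by blast
      have ne: "B0 - {0} \<noteq> {}" using B0ne B0(2) by blast
      have dB: "d \<in> B0" "d \<noteq> 0" using Min_in[OF fin ne] d_def by auto
      have dmin: "d \<le> h" if "h \<in> B0" "h \<noteq> 0" for h using Min_le[OF fin] that d_def by simp
      have dN: "d < N" using dB B0S by auto
      have mults: "k * d \<in> B0" if "k * d < N" for k using mult[OF dB(1), of k] that by simp
      have dvdh: "d dvd h" if h: "h \<in> B0" for h
      proof -
        define q where "q = h div d"
        define r where "r = h mod d"
        have hN: "h < N" using h B0S by auto
        have hqr: "h = q * d + r" unfolding q_def r_def by simp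
        have "q * d \<in> B0" using mults hqr hN by simp
        then have "(N - q*d) mod N \<in> B0" by (rule neg)
        from clos[OF this h] have "(h + (N - q*d) mod N) mod N \<in> B0" by simp
        moreover have "(h + (N - q*d) mod N) mod N = (r + N) mod N"
        proof -
          have "(h + (N - q*d) mod N) mod N = (h + (N - q*d)) mod N" by (rule mod_add_right_eq)
          moreover have "h + (N - q*d) = r + N" using hqr hN by linarith
          ultimately show ?thesis by simp
        qed
        moreover have "r < N" using dN r_def dB(2) mod_less_divisor[of d h] by linarith
        ultimately have "r \<in> B0" by simp
        moreover have "r < d" using r_def dB(2) by simp
        ultimately have "r = 0" using dmin by (meson leD)
        then show ?thesis using r_def by (simp add: dvd_eq_mod_eq_0)
      qed
      have dvdN: "d dvd N"
      proof (rule ccontr)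
        assume nd: "\<not> d dvd N"
        define q where "q = N div d"
        define r where "r = N mod d"
        have r0: "r \<noteq> 0" using nd r_def by (simp add: dvd_eq_mod_eq_0)
        have Nqr: "N = q * d + r" unfolding q_def r_def by simp
        then have "q * d < N" using r0 by simp
        then have "q * d \<in> B0" by (rule mults)
        then have "(N - q*d) mod N \<in> B0" by (rule neg)
        moreover have "(N - q*d) mod N = r"
        proof -
          have "N - q*d = r" using Nqr by simp
          moreover have "r < d" using r_def dB(2) by simp
          ultimately show ?thesis using dN by simp
        qed
        ultimately have "r \<in> B0" by simp
        moreover have "r < d" using r_def dB(2) by simp
        ultimately show False using dmin r0 by (meson leD)
      qed
      obtain i where i: "i \<le> n" "d = 2^i"
        using dvdN divides_primepow_nat[of 2 d n] N_def by auto
      have B0eq: "B0 = cset n i 0"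
      proof
        show "B0 \<subseteq> cset n i 0"
          using dvdh B0S i N_def unfolding cset_def by (auto simp: dvd_eq_mod_eq_0)
        show "cset n i 0 \<subseteq> B0"
        proof
          fix z assume "z \<in> cset n i 0"
          then have z: "z < N" "d dvd z" unfolding cset_def N_def i(2) by (auto simp: dvd_eq_mod_eq_0)
          then have zz: "(z div d) * d = z" by simp
          then have "(z div d) * d \<in> B0" using mults[of "z div d"] z(1) by simp
          then show "z \<in> B0" using zz by simp
        qed
      qed
      have i0: "i \<noteq> 0"
      proof
        assume "i = 0"
        then have "B0 = {..<N}" using B0eq N_def unfolding cset_def by auto
        then show False using B0nS S N_def by simp
      qed
      have iN: "i < n" using i dN N_def by (metis le_neq_implies_less nat_less_le)
      have shift: "t x ` cset n i 0 = cset n i x" if xN: "x < N" for x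
      proof
        have dvi: "(2::nat)^i dvd N" using i N_def by (simp add: le_imp_power_dvd)
        show "t x ` cset n i 0 \<subseteq> cset n i x"
        proof
          fix w assume "w \<in> t x ` cset n i 0"
          then obtain y where y: "y \<in> cset n i 0" "w = (y + x) mod N" unfolding t_def by auto
          have "w mod 2^i = (y + x) mod 2^i" using y(2) dvi by (simp add: mod_mod_cancel)
          also have "\<dots> = (y mod 2^i + x) mod 2^i" by (simp add: mod_add_left_eq)
          also have "\<dots> = x mod 2^i" using y(1) unfolding cset_def by simp
          finally show "w \<in> cset n i x" using y(2) N0 unfolding cset_def N_def by simp
        qed
        show "cset n i x \<subseteq> t x ` cset n i 0"
        proof
          fix z assume z: "z \<in> cset n i x"
          define y where "y = (z + (N - x)) mod N"
          have zN: "z < N" using z unfolding cset_def N_def by simp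
          have "(y + x) mod N = ((z + (N - x)) + x) mod N" unfolding y_def by (simp add: mod_add_left_eq)
          also have "(z + (N - x)) + x = z + N" using xN by simp
          finally have e1: "t x y = z" unfolding t_def using zN by simp
          have "y mod 2^i = (z + (N - x)) mod 2^i" unfolding y_def using dvi by (simp add: mod_mod_cancel)
          also have "\<dots> = (z mod 2^i + (N - x)) mod 2^i" by (simp add: mod_add_left_eq)
          also have "\<dots> = (x mod 2^i + (N - x)) mod 2^i" using z unfolding cset_def by simp
          also have "\<dots> = (x + (N - x)) mod 2^i" by (simp add: mod_add_left_eq)
          also have "\<dots> = 0" using xN dvi by simp
          finally have "y \<in> cset n i 0" unfolding cset_def y_def N_def using N0 by (simp add: N_def)
          then show "z \<in> t x ` cset n i 0" using e1 by force
        qed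
      qed
      have "\<forall>B\<in>P. \<exists>c. B = cset n i c"
      proof
        fix B assume B: "B \<in> P"
        then obtain x where x: "x \<in> B" using blk_ne by blast
        have "x < N" using x B blk_sub S N_def by auto
        then show "\<exists>c. B = cset n i c" using blkx[OF B x] B0eq shift by auto
      qed
      then show ?thesis using i0 iN B0eq B0(1) by auto
    qed
  qed
qed




lemma sbox_val:
  assumes ps: "parallel_sbox m \<delta> gs g" and v: "v \<in> vspace (m*\<delta>)"
  shows "g v \<in> vspace (m*\<delta>)" "\<And>j. j<\<delta> \<Longrightarrow> brick_proj m j (g v) = gs j (brick_proj m j v)"
proof -
  have gv: "g v = (\<Sum>j<\<delta>. gs j (brick_proj m j v) * 2^(j*m))" using ps v unfolding parallel_sbox_def by blast
  have "\<forall>i<\<delta>. gs i (brick_proj m i v) < 2^m"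
  proof (intro allI impI)
    fix i assume "i < \<delta>"
    then have "bij_betw (gs i) {..<2^m} {..<2^m}" using ps unfolding parallel_sbox_def by blast
    then show "gs i (brick_proj m i v) < 2^m" using bp_lt[of m i v] by (auto dest: bij_betw_apply)
  qed
  from digits_sum[OF this] gv
  show "g v \<in> vspace (m*\<delta>)" "\<And>j. j<\<delta> \<Longrightarrow> brick_proj m j (g v) = gs j (brick_proj m j v)"
    by (auto simp: vspace_def mult.commute)
qed

lemma sbox_bij:
  assumes ps: "parallel_sbox m \<delta> gs g"
  shows "bij_betw g (vspace (m*\<delta>)) (vspace (m*\<delta>))"
proof -
  have inj: "inj_on g (vspace (m*\<delta>))"
  proof (rule inj_onI)
    fix v w assume v: "v \<in> vspace (m*\<delta>)" and w: "w \<in> vspace (m*\<delta>)" and eq: "g v = g w"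
    have "\<forall>j<\<delta>. brick_proj m j v = brick_proj m j w"
    proof (intro allI impI)
      fix j assume j: "j < \<delta>"
      then have "inj_on (gs j) {..<2^m}" using ps unfolding parallel_sbox_def bij_betw_def by blast
      moreover have "gs j (brick_proj m j v) = gs j (brick_proj m j w)"
        using sbox_val(2)[OF ps v j] sbox_val(2)[OF ps w j] eq by simp
      ultimately show "brick_proj m j v = brick_proj m j w" using bp_lt[of m j] by (auto dest: inj_onD)
    qed
    moreover have "v = (\<Sum>j<\<delta>. brick_proj m j v * 2^(j*m))" "w = (\<Sum>j<\<delta>. brick_proj m j w * 2^(j*m))"
      using v w digits_decomp[of _ \<delta> m] by (auto simp: vspace_def mult.commute)
    ultimately show "v = w" by (metis (no_types, lifting) lessThan_iff sum.cong)
  qed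
  moreover have "g ` vspace (m*\<delta>) \<subseteq> vspace (m*\<delta>)" using sbox_val(1)[OF ps] by auto
  ultimately show ?thesis
    by (metis bij_betw_def card_image card_subset_eq finite_lessThan vspace_def)
qed

lemma sbox_type:
  assumes ps: "parallel_sbox m \<delta> gs g" and D: "D \<subseteq> vspace (m*\<delta>)"
  shows "set_type m \<delta> (g ` D) = set_type m \<delta> D"
proof -
  have "brick_symb m (g ` D) j = brick_symb m D j" if j: "j < \<delta>" for j
  proof -
    have "brick_proj m j ` g ` D = gs j ` brick_proj m j ` D"
      using sbox_val(2)[OF ps _ j] D by (force simp: image_image)
    moreover have "inj_on (gs j) {..<2^m}" using ps j unfolding parallel_sbox_def bij_betw_def by blast
    then have "inj_on (gs j) (brick_proj m j ` D)" by (rule inj_on_subset) (auto simp: bp_lt)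
    ultimately have "card (brick_proj m j ` g ` D) = card (brick_proj m j ` D)"
      by (simp add: card_image)
    then show ?thesis unfolding brick_symb_def by simp
  qed
  then show ?thesis unfolding set_type_def by simp
qed




lemma cset_type:
  assumes m: "m \<ge> 1" and n: "n = m * \<delta>" and i0: "0 < i" and "i < n"
  defines "b \<equiv> (if i mod m = 0 then 0 else 1::nat)"
  shows "set_type m \<delta> (cset n i c) =
    replicate (i div m) White @ replicate b Ruled @ replicate (\<delta> - i div m - b) Black"
proof -
  let ?a = "i div m"
  have "?a * m \<le> i" by (simp add: div_times_less_eq_dividend)
  have ad: "?a < \<delta>" using assms by (simp add: less_mult_imp_div_less mult.commute)
  have abd: "?a + b \<le> \<delta>" using ad b_def by auto
  show ?thesis
  proof (rule nth_equalityI)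
    show "length (set_type m \<delta> (cset n i c)) = length (replicate ?a White @ replicate b Ruled @ replicate (\<delta> - ?a - b) Black)"
      unfolding set_type_def using abd by simp
  next
    fix k assume "k < length (set_type m \<delta> (cset n i c))"
    then have k: "k < \<delta>" unfolding set_type_def by simp
    have L: "set_type m \<delta> (cset n i c) ! k = brick_symb m (cset n i c) k"
      unfolding set_type_def using k by simp
    show "set_type m \<delta> (cset n i c) ! k = (replicate ?a White @ replicate b Ruled @ replicate (\<delta> - ?a - b) Black) ! k"
    proof (cases "k < ?a")
      case True
      then have "Suc k * m \<le> ?a * m" by (intro mult_le_mono1) simp
      also have "\<dots> \<le> i" by (simp add: div_times_less_eq_dividend)
      finally have "brick_symb m (cset n i c) k = White" using cset_white assms by simp
      then show ?thesis using L True by (simp add: nth_append)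
    next
      case False
      show ?thesis
      proof (cases "k < ?a + b")
        case True
        then have "k = ?a" "b = 1" "i mod m \<noteq> 0" using False b_def by (auto split: if_splits)
        then have "brick_symb m (cset n i c) k = Ruled" using cset_ruled assms by simp
        moreover have "k - ?a < b" using True False by linarith
        ultimately show ?thesis using L True False by (simp add: nth_append)
      next
        case F2: False
        have "i \<le> k * m"
        proof (cases "i mod m = 0")
          case True
          then have "i = ?a * m" by (metis div_mult_mod_eq add_0_right)
          moreover have "?a * m \<le> k * m" using False by simp
          ultimately show ?thesis by simp
        next
          case F3: False
          then have "Suc ?a \<le> k" using F2 b_def by simp
          then have "Suc ?a * m \<le> k * m" by (intro mult_le_mono1)
          moreover have "i < Suc ?a * m" proof -
            have "i = ?a*m + i mod m" by simp
            moreover have "i mod m < m" using m by simp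
            moreover have "Suc ?a * m = ?a*m + m" by simp
            ultimately show ?thesis by linarith
          qed
          ultimately show ?thesis by simp
        qed
        then have "brick_symb m (cset n i c) k = Black" using cset_black[OF _ k n m] by simp
        then show ?thesis using L False F2 k abd by (simp add: nth_append)
      qed
    qed
  qed
qed




lemma transl_bij: "bij_betw (transl n k) (vspace n) (vspace n)"
proof -
  have inj: "inj_on (transl n k) (vspace n)"
  proof (rule inj_onI)
    fix x y assume x: "x \<in> vspace n" and y: "y \<in> vspace n" and e: "transl n k x = transl n k y"
    have bk: "((transl n k z) + (2^n - k mod 2^n)) mod 2^n = z" if "z < 2^n" for z
    proof -
      have "((transl n k z) + (2^n - k mod 2^n)) mod 2^n = (z + k + (2^n - k mod 2^n)) mod 2^n"
        unfolding transl_def by (rule mod_add_left_eq)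
      also have "z + k + (2^n - k mod 2^n) = z + (k div 2^n + 1) * 2^n"
      proof -
        have "k = k div 2^n * 2^n + k mod 2^n" by (rule div_mult_mod_eq[symmetric])
        moreover have "k mod 2^n < (2::nat)^n" by simp
        moreover have "(k div 2^n + 1) * 2^n = k div 2^n * 2^n + (2::nat)^n" by (simp add: algebra_simps)
        ultimately show ?thesis by linarith
      qed
      also have "(z + (k div 2^n + 1) * 2^n) mod 2^n = z" using that by (simp only: mod_mult_self1) simp
      finally show ?thesis .
    qed
    have xl: "x < 2^n" and yl: "y < 2^n" using x y unfolding vspace_def by auto
    have "x = ((transl n k x) + (2^n - k mod 2^n)) mod 2^n" using bk[OF xl] by (rule sym)
    also have "\<dots> = ((transl n k y) + (2^n - k mod 2^n)) mod 2^n" using e by (rule arg_cong)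
    also have "\<dots> = y" using bk[OF yl] .
    finally show "x = y" .
  qed
  moreover have "transl n k ` vspace n \<subseteq> vspace n" unfolding transl_def vspace_def by auto
  ultimately show ?thesis
    by (metis bij_betw_def card_image card_subset_eq finite_lessThan vspace_def)
qed

lemma BijGroup_mult_apply:
  assumes "a \<in> Bij S" "b \<in> Bij S" "x \<in> S"
  shows "(a \<otimes>\<^bsub>BijGroup S\<^esub> b) x = a (b x)"
proof -
  have "a \<otimes>\<^bsub>BijGroup S\<^esub> b = compose S a b" using assms by (simp add: BijGroup_def)
  then show ?thesis using assms(3) by (simp add: compose_def)
qed

theorem mainTheorem2:
  fixes m \<delta> n :: nat and gs :: "nat \<Rightarrow> nat \<Rightarrow> nat" and g l :: "nat \<Rightarrow> nat"
  assumes "m \<ge> 1" and "\<delta> \<ge> 1" and "n = m * \<delta>"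
    and "parallel_sbox m \<delta> gs g"
    and "bij_betw l (vspace n) (vspace n)" and "f2_linear n l"
    and "non_type_preserving m \<delta> l"
  shows "primitive_on
           (generate (BijGroup (vspace n)) {round_fun n g l k | k. k \<in> vspace n})
           (vspace n)"
proof -
  let ?S = "vspace n"
  let ?BG = "BijGroup ?S"
  let ?H = "{round_fun n g l k | k. k \<in> vspace n}"
  let ?G = "generate ?BG ?H"
  have m: "m \<ge> 1" and n: "n = m * \<delta>" and ps: "parallel_sbox m \<delta> gs g"
    and lb: "bij_betw l ?S ?S" and ntp: "non_type_preserving m \<delta> l" using assms by auto
  have gb: "bij_betw g ?S ?S" using sbox_bij[OF ps] n by simp
  have grp: "group ?BG" by (rule group_BijGroup)
  have rf_eq: "round_fun n g l k = restrict (transl n k \<circ> l \<circ> g) ?S" for k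
    unfolding round_fun_def by (simp add: o_def)
  have rf_bij: "round_fun n g l k \<in> Bij ?S" for k
  proof -
    have "bij_betw (transl n k \<circ> l \<circ> g) ?S ?S"
      using gb lb transl_bij[of n k] by (intro bij_betw_trans)
    then show ?thesis unfolding rf_eq Bij_def by simp
  qed
  have carr: "carrier ?BG = Bij ?S" by (simp add: BijGroup_def)
  define e0 where "e0 = round_fun n g l 0"
  have e0v: "e0 y = l (g y)" if "y \<in> ?S" for y
  proof -
    have "l (g y) \<in> ?S" using that gb lb by (meson bij_betw_apply)
    moreover have "y < 2^n" using that unfolding vspace_def by simp
    ultimately show ?thesis unfolding e0_def round_fun_def transl_def vspace_def by simp
  qed
  have e0B: "e0 \<in> carrier ?BG" using rf_bij carr e0_def by simp
  have e0G: "e0 \<in> ?G" unfolding e0_def by (rule generate.incl) (auto simp: vspace_def)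
  have inv_e0: "inv\<^bsub>?BG\<^esub> e0 \<in> carrier ?BG" using grp e0B by (simp add: group.inv_closed)
  have e0inv: "e0 ((inv\<^bsub>?BG\<^esub> e0) x) = x" if "x \<in> ?S" for x
  proof -
    have "e0 \<otimes>\<^bsub>?BG\<^esub> inv\<^bsub>?BG\<^esub> e0 = \<one>\<^bsub>?BG\<^esub>" using grp e0B by (simp add: group.r_inv)
    moreover have "\<one>\<^bsub>?BG\<^esub> = (\<lambda>x\<in>?S. x)" by (simp add: BijGroup_def)
    ultimately have "(e0 \<otimes>\<^bsub>?BG\<^esub> inv\<^bsub>?BG\<^esub> e0) x = x" using that by simp
    moreover have "(e0 \<otimes>\<^bsub>?BG\<^esub> inv\<^bsub>?BG\<^esub> e0) x = e0 ((inv\<^bsub>?BG\<^esub> e0) x)"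
      using BijGroup_mult_apply[of e0 ?S "inv\<^bsub>?BG\<^esub> e0" x] e0B inv_e0 carr that by simp
    ultimately show ?thesis by simp
  qed
  have transG: "\<exists>s\<in>?G. \<forall>x\<in>?S. s x = transl n k x" if k: "k \<in> ?S" for k
  proof -
    define s where "s = round_fun n g l k \<otimes>\<^bsub>?BG\<^esub> inv\<^bsub>?BG\<^esub> e0"
    have "round_fun n g l k \<in> ?G" using k by (intro generate.incl) auto
    moreover have "inv\<^bsub>?BG\<^esub> e0 \<in> ?G" unfolding e0_def by (rule generate.inv) (auto simp: vspace_def)
    ultimately have sG: "s \<in> ?G" unfolding s_def by (rule generate.eng)
    have "s x = transl n k x" if x: "x \<in> ?S" for x
    proof -
      have ix: "(inv\<^bsub>?BG\<^esub> e0) x \<in> ?S" using inv_e0 carr x Bij_imp_funcset by blast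
      have "s x = round_fun n g l k ((inv\<^bsub>?BG\<^esub> e0) x)"
        unfolding s_def using BijGroup_mult_apply[OF rf_bij _ x] inv_e0 carr by simp
      also have "\<dots> = transl n k (l (g ((inv\<^bsub>?BG\<^esub> e0) x)))" unfolding round_fun_def using ix by simp
      also have "\<dots> = transl n k x" using e0inv[OF x] e0v[OF ix] by simp
      finally show ?thesis .
    qed
    then show ?thesis using sG by blast
  qed
  show ?thesis unfolding primitive_on_def
  proof (intro conjI ballI allI impI)
    fix x y assume x: "x \<in> ?S" and y: "y \<in> ?S"
    define k where "k = (y + (2^n - x)) mod 2^n"
    have kS: "k \<in> ?S" unfolding k_def vspace_def by simp
    have "transl n k x = (x + (y + (2^n - x))) mod 2^n" unfolding transl_def k_def by (simp add: mod_add_right_eq)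
    also have "x + (y + (2^n - x)) = y + 2^n" using x unfolding vspace_def by simp
    finally have "transl n k x = y" using y unfolding vspace_def by simp
    moreover obtain s where s: "s \<in> ?G" "\<forall>x\<in>?S. s x = transl n k x" using transG[OF kS] by blast
    ultimately have "s x = y" using x by simp
    then show "\<exists>h\<in>?G. h x = y" using s(1) by blast
  next
    fix P assume A: "is_partition ?S P \<and> (\<forall>h\<in>?G. \<forall>B\<in>P. h ` B \<in> P)"
    then have P: "is_partition ?S P" and Pinv: "\<forall>h\<in>?G. \<forall>B\<in>P. h ` B \<in> P" by auto
    have Bsub: "B \<subseteq> ?S" if "B \<in> P" for B using P that unfolding is_partition_def by blast
    have tinv: "\<forall>k<2^n. \<forall>B\<in>P. (\<lambda>x. (x+k) mod 2^n) ` B \<in> P"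
    proof (intro allI impI ballI)
      fix k B assume k: "k < (2::nat)^n" and B: "B \<in> P"
      obtain s where s: "s \<in> ?G" "\<forall>x\<in>?S. s x = transl n k x" using transG[of k] k unfolding vspace_def by auto
      have "s ` B = (\<lambda>x. (x+k) mod 2^n) ` B" proof (rule image_cong)
        fix x assume "x \<in> B"
        then show "s x = (x + k) mod 2^n" using s(2) Bsub[OF B] unfolding transl_def by blast
      qed simp
      moreover have "s ` B \<in> P" using Pinv s(1) B by blast
      ultimately show "(\<lambda>x. (x+k) mod 2^n) ` B \<in> P" by simp
    qed
    have "P = {?S} \<or> P = (\<lambda>x. {x}) ` ?S \<or> (\<exists>i. 0<i \<and> i<n \<and> cset n i 0 \<in> P \<and> (\<forall>B\<in>P. \<exists>c. B = cset n i c))"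
      using blocks_transl[OF _ P tinv] unfolding vspace_def by simp
    moreover have "\<not> (\<exists>i. 0<i \<and> i<n \<and> cset n i 0 \<in> P \<and> (\<forall>B\<in>P. \<exists>c. B = cset n i c))"
    proof
      assume "\<exists>i. 0<i \<and> i<n \<and> cset n i 0 \<in> P \<and> (\<forall>B\<in>P. \<exists>c. B = cset n i c)"
      then obtain i where i: "0 < i" "i < n" "cset n i 0 \<in> P" "\<forall>B\<in>P. \<exists>c. B = cset n i c" by blast
      let ?C = "cset n i 0"
      have CS: "?C \<subseteq> ?S" unfolding cset_def vspace_def by auto
      have "e0 ` ?C \<in> P" using Pinv e0G i(3) by blast
      then obtain c where c: "e0 ` ?C = cset n i c" using i(4) by blast
      define D where "D = g ` ?C"
      have "e0 ` ?C = (\<lambda>y. l (g y)) ` ?C"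
      proof (rule image_cong)
        fix y assume "y \<in> ?C"
        then show "e0 y = l (g y)" using e0v CS by blast
      qed simp
      then have eD: "e0 ` ?C = l ` D" unfolding D_def by (simp add: image_image)
      have "g ` ?S = ?S" using gb by (simp add: bij_betw_def)
      then have "D \<subseteq> ?S" unfolding D_def using CS by blast
      then have DS: "D \<subseteq> vspace (m*\<delta>)" using n by simp
      have "0 \<in> ?C" unfolding cset_def by simp
      then have Dne: "D \<noteq> {}" unfolding D_def by blast
      define b where "b = (if i mod m = 0 then 0 else 1::nat)"
      define a where "a = i div m"
      define cc where "cc = \<delta> - a - b"
      have ty: "set_type m \<delta> (cset n i c') = replicate a White @ replicate b Ruled @ replicate cc Black" for c'
        unfolding a_def b_def cc_def using cset_type[OF m n i(1) i(2)] by simp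
      have tD: "set_type m \<delta> D = set_type m \<delta> ?C" unfolding D_def using sbox_type[OF ps] CS n by simp
      have lD: "l ` D = cset n i c" using eD c by simp
      have tlD: "set_type m \<delta> (l ` D) = set_type m \<delta> D" unfolding lD tD by (simp only: ty)
      have ad: "a < \<delta>" unfolding a_def using i(2) n m by (simp add: less_mult_imp_div_less mult.commute)
      have abc: "a + b + cc = \<delta>" unfolding cc_def using ad b_def by auto
      have cnd: "cc \<noteq> \<delta>"
      proof
        assume "cc = \<delta>"
        then have "a = 0" "b = 0" using abc by auto
        then have "i < m" "i mod m = 0" unfolding a_def b_def using m by (auto split: if_splits)
        then show False using i(1) by simp
      qed
      have H: "D \<subseteq> vspace (m*\<delta>) \<and> D \<noteq> {} \<and> b \<le> 1 \<and> a + b + cc = \<delta> \<and>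
        set_type m \<delta> D = replicate a White @ replicate b Ruled @ replicate cc Black \<and>
        a \<noteq> \<delta> \<and> cc \<noteq> \<delta>"
      proof (intro conjI)
        show "b \<le> 1" unfolding b_def by simp
        show "a \<noteq> \<delta>" using ad by simp
        show "set_type m \<delta> D = replicate a White @ replicate b Ruled @ replicate cc Black"
          using tD ty[of 0] by simp
      qed (use DS Dne abc cnd in auto)
      have "set_type m \<delta> (l ` D) \<noteq> set_type m \<delta> D"
        using ntp[unfolded non_type_preserving_def, rule_format, OF H] .
      then show False using tlD by simp
    qed
    ultimately show "P = {?S} \<or> P = (\<lambda>x. {x}) ` ?S" by blast
  qed
qed


end
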